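(* Let $p\ge2$. The probabilistic frame potential $PFP(\mu)=\iint\langle x,y\rangle^2\,d\mu(x)\,d\mu(y)$ is strongly differentiable at every $\mu\in P_p(\mathbb{R}^d)$, with gradient plan $(\iota,4S_\mu)_\#\mu$.
   Context: $P_p(\mathbb{R}^d)$ is the set of Borel probability measures on $\mathbb{R}^d$ with finite $p$-th moment; $S_\mu=\int yy^\top d\mu(y)$ is the frame operator, viewed as the linear map $x\mapsto S_\mu x$; $\iota$ is the identity map and $(\iota,g)_\#\mu$ the pushforward of $\mu$ under $x\mapsto(x,g(x))$. Let $q=p/(p-1)$. For $\gamma\in P(\mathbb{R}^d\times\mathbb{R}^d)$ and $\nu\in P_p(\mathbb{R}^d)$, $\Gamma(\gamma,\nu)$ denotes the set of probability measures $\beta$ on $(\mathbb{R}^d)^3$ with $(\pi^1,\pi^2)_\#\beta=\gamma$ and $\pi^3_\#\beta=\nu$, and for $\mu=\pi^1_\#\gamma$, $C_{p,\beta}(\mu,\nu)=\big(\iiint\|x_1-x_3\|^p\,d\beta\big)^{1/p}$. A functional $F:P_p(\mathbb{R}^d)\to\mathbb{R}$ is strongly differentiable at $\mu$ with gradient plan $\gamma$ (where $\pi^1_\#\gamma=\mu$ and $\iint\|x_2\|^q d\gamma<\infty$) if for every $\nu\in P_p(\mathbb{R}^d)$ and every $\beta\in\Gamma(\gamma,\nu)$, $F(\nu)-F(\mu)=\iiint\langle x_2,x_3-x_1\rangle\,d\beta(x_1,x_2,x_3)+R_\beta$, where $|R_\beta|\le\omega(C_{p,\beta}(\mu,\nu))$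 for a function $\omega$ depending only on $\mu$ with $\omega(r)/r\to0$ as $r\to0$. *)

theory Defs
  imports "HOL-Probability.Probability"
begin

definition Pp :: "real \<Rightarrow> 'a::euclidean_space measure set" where
  "Pp p = {\<mu>. prob_space \<mu> \<and> sets \<mu> = sets borel \<and> integrable \<mu> (\<lambda>x. norm x powr p)}"

definition frame_op :: "'a::euclidean_space measure \<Rightarrow> 'a \<Rightarrow> 'a" where
  "frame_op \<mu> x = (\<integral>y. (y \<bullet> x) *\<^sub>R y \<partial>\<mu>)"

definition PFP :: "'a::euclidean_space measure \<Rightarrow> real" where
  "PFP \<mu> = (\<integral>x. (\<integral>y. (x \<bullet> y)\<^sup>2 \<partial>\<mu>) \<partial>\<mu>)"

definition Gamma :: "('a::euclidean_space \<times> 'a) measure \<Rightarrow> 'a measure \<Rightarrow> ('a \<times> 'a \<times> 'a) measure set" where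
  "Gamma \<gamma> \<nu> = {\<beta>. prob_space \<beta> \<and> sets \<beta> = sets borel \<and>
      distr \<beta> borel (\<lambda>(x1, x2, x3). (x1, x2)) = \<gamma> \<and>
      distr \<beta> borel (\<lambda>(x1, x2, x3). x3) = \<nu>}"

definition Cpb :: "real \<Rightarrow> ('a::euclidean_space \<times> 'a \<times> 'a) measure \<Rightarrow> real" where
  "Cpb p \<beta> = (\<integral>(x1, x2, x3). norm (x1 - x3) powr p \<partial>\<beta>) powr (1 / p)"

definition strongly_diff ::
  "real \<Rightarrow> ('a::euclidean_space measure \<Rightarrow> real) \<Rightarrow> 'a measure \<Rightarrow> ('a \<times> 'a) measure \<Rightarrow> bool" where
  "strongly_diff p F \<mu> \<gamma> \<longleftrightarrow>
     prob_space \<gamma> \<and> sets \<gamma> = sets borel \<and> distr \<gamma> borel fst = \<mu> \<and>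
     integrable \<gamma> (\<lambda>(x1, x2). norm x2 powr (p / (p - 1))) \<and>
     (\<exists>\<omega>::real \<Rightarrow> real. ((\<lambda>r. \<omega> r / r) \<longlongrightarrow> 0) (at_right 0) \<and>
        (\<forall>\<nu>\<in>Pp p. \<forall>\<beta>\<in>Gamma \<gamma> \<nu>.
           \<bar>F \<nu> - F \<mu> - (\<integral>(x1, x2, x3). x2 \<bullet> (x3 - x1) \<partial>\<beta>)\<bar> \<le> \<omega> (Cpb p \<beta>)))"

end

theory Submission
  imports Defs
begin

lemma meas_borelI: "sets M = sets borel \<Longrightarrow> continuous_on UNIV f \<Longrightarrow> f \<in> borel_measurable M"
  using borel_measurable_continuous_onI measurable_cong_sets by blast

lemma sq_le_powr: fixes z p :: real assumes "z \<ge> 0" "1 \<le> p" "p \<le> 2"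
  shows "z powr p \<le> 1 + z^2"
proof (cases "z \<le> 1")
  case True
  then have "z powr p \<le> 1 powr p" using assms by (intro powr_mono2) auto
  then have "z powr p \<le> 1" by simp
  then show ?thesis by (smt (verit) zero_le_power2)
next
  case False
  then have "z powr p \<le> z powr 2" using assms by (intro powr_mono) auto
  also have "\<dots> = z^2" using assms by (simp add: powr_realpow')
  finally show ?thesis by simp
qed

lemma sq_le_powr2: fixes z p :: real assumes "z \<ge> 0" "2 \<le> p"
  shows "z^2 \<le> 1 + z powr p"
proof (cases "z \<le> 1")
  case True
  then have "z^2 \<le> 1" using assms by (simp add: power_le_one)
  moreover have "z powr p \<ge> 0" by simp
  ultimately show ?thesis by linarith
next
  case False
  then have "z powr 2 \<le> z powr p" using assms by (intro powr_mono) auto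
  moreover have "z powr 2 = z^2" using assms by (simp add: powr_realpow')
  ultimately show ?thesis by simp
qed

lemma sq_integrable:
  fixes M :: "'m measure" and a :: "'m \<Rightarrow> 'a::euclidean_space"
  assumes "finite_measure M" "a \<in> borel_measurable M" "integrable M (\<lambda>x. norm (a x) powr p)" "p \<ge> 2"
  shows "integrable M (\<lambda>x. norm (a x) ^ 2)"
proof -
  have i: "integrable M (\<lambda>x. 1 + norm (a x) powr p)"
    by (intro Bochner_Integration.integrable_add finite_measure.integrable_const[OF assms(1)] assms(3))
  show ?thesis
  proof (rule Bochner_Integration.integrable_bound[OF i])
  show "(\<lambda>x. norm (a x) ^ 2) \<in> borel_measurable M" by (rule borel_measurable_continuous_on[OF _ assms(2), where f="\<lambda>z. norm z ^ 2"]) (intro continuous_intros)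
  show "AE x in M. norm (norm (a x) ^ 2) \<le> norm (1 + norm (a x) powr p)"
    using sq_le_powr2[OF _ assms(4)] by (auto intro!: AE_I2)
qed
qed

lemma prod_integrable:
  fixes M :: "'m measure" and a b :: "'m \<Rightarrow> 'a::euclidean_space" and g :: "'m \<Rightarrow> real"
  assumes "integrable M (\<lambda>x. norm (a x) ^ 2)" "integrable M (\<lambda>x. norm (b x) ^ 2)"
    "g \<in> borel_measurable M" "\<And>x. \<bar>g x\<bar> \<le> norm (a x) * norm (b x)"
  shows "integrable M g"
proof -
  have i: "integrable M (\<lambda>x. norm (a x) ^ 2 + norm (b x) ^ 2)" using assms by auto
  show ?thesis
  proof (rule Bochner_Integration.integrable_bound[OF i])
  show "g \<in> borel_measurable M" by fact
  show "AE x in M. norm (g x) \<le> norm (norm (a x) ^ 2 + norm (b x) ^ 2)"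
  proof (intro AE_I2)
    fix x
    have "norm (a x) * norm (b x) \<le> norm (a x) ^ 2 + norm (b x) ^ 2"
    proof -
      have "2 * (norm (a x) * norm (b x)) \<le> norm (a x) ^ 2 + norm (b x) ^ 2"
        using sum_squares_bound[of "norm (a x)" "norm (b x)"] by (simp add: mult.assoc)
      moreover have "0 \<le> norm (a x) * norm (b x)" by simp
      ultimately show ?thesis by linarith
    qed
    then show "norm (g x) \<le> norm (norm (a x) ^ 2 + norm (b x) ^ 2)"
      using assms(4)[of x] by simp
  qed
qed
qed

lemma inner_sq_expand:
  fixes x y :: "'a::euclidean_space"
  shows "(x \<bullet> y)\<^sup>2 = (\<Sum>i\<in>Basis. \<Sum>j\<in>Basis. ((x \<bullet> i) * (x \<bullet> j)) * ((y \<bullet> i) * (y \<bullet> j)))"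
  unfolding power2_eq_square
  apply (subst (1 2) euclidean_inner)
  apply (simp add: sum_product)
  apply (intro sum.cong refl)
  by (simp add: mult.commute mult.left_commute)

lemma inner_prod_expand:
  fixes x y v :: "'a::euclidean_space"
  shows "(y \<bullet> x) * (y \<bullet> v) = (\<Sum>i\<in>Basis. \<Sum>j\<in>Basis. ((x \<bullet> i) * (v \<bullet> j)) * ((y \<bullet> i) * (y \<bullet> j)))"
  apply (subst (1 2) euclidean_inner)
  apply (simp add: sum_product)
  apply (intro sum.cong refl)
  by (simp add: mult.commute mult.left_commute)

lemma integral_double_sum:
  fixes f :: "'i \<Rightarrow> 'j \<Rightarrow> 'm \<Rightarrow> real"
  assumes "\<And>i j. i \<in> A \<Longrightarrow> j \<in> B \<Longrightarrow> integrable M (f i j)"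
  shows "(\<integral>x. (\<Sum>i\<in>A. \<Sum>j\<in>B. c i j * f i j x) \<partial>M) = (\<Sum>i\<in>A. \<Sum>j\<in>B. c i j * integral\<^sup>L M (f i j))"
  using assms by (simp add: integrable_sum)

definition mom :: "'m measure \<Rightarrow> ('m \<Rightarrow> 'a::euclidean_space) \<Rightarrow> ('m \<Rightarrow> 'a) \<Rightarrow> 'a \<Rightarrow> 'a \<Rightarrow> real" where
  "mom M a b i j = (\<integral>x. (a x \<bullet> i) * (b x \<bullet> j) \<partial>M)"

lemma pair_integrable:
  fixes M :: "'m measure" and a b :: "'m \<Rightarrow> 'a::euclidean_space"
  assumes "integrable M (\<lambda>x. norm (a x) ^ 2)" "integrable M (\<lambda>x. norm (b x) ^ 2)"
    "a \<in> borel_measurable M" "b \<in> borel_measurable M" "i \<in> Basis" "j \<in> Basis"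
  shows "integrable M (\<lambda>x. (a x \<bullet> i) * (b x \<bullet> j))"
proof (rule prod_integrable[OF assms(1,2)])
  show "(\<lambda>x. a x \<bullet> i * (b x \<bullet> j)) \<in> borel_measurable M"
    by (intro borel_measurable_times borel_measurable_inner assms(3,4) borel_measurable_const)
  fix x show "\<bar>a x \<bullet> i * (b x \<bullet> j)\<bar> \<le> norm (a x) * norm (b x)"
    unfolding abs_mult using Basis_le_norm[OF assms(5), of "a x"] Basis_le_norm[OF assms(6), of "b x"]
    by (intro mult_mono) auto
qed

lemma PFP_expand:
  fixes M :: "'a::euclidean_space measure"
  assumes "integrable M (\<lambda>x. norm x ^ 2)" "sets M = sets borel"
  shows "PFP M = (\<Sum>i\<in>Basis. \<Sum>j\<in>Basis. mom M (\<lambda>x. x) (\<lambda>x. x) i j * mom M (\<lambda>x. x) (\<lambda>x. x) i j)"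
proof -
  have meas: "(\<lambda>x. x) \<in> borel_measurable M" using assms(2) by (intro meas_borelI continuous_intros)
  have int: "\<And>i j. i \<in> Basis \<Longrightarrow> j \<in> Basis \<Longrightarrow> integrable M (\<lambda>x. (x \<bullet> i) * (x \<bullet> j))"
    using pair_integrable[OF assms(1) assms(1) meas meas] by blast
  have inner: "(\<integral>y. (x \<bullet> y)\<^sup>2 \<partial>M) = (\<Sum>i\<in>Basis. \<Sum>j\<in>Basis. mom M (\<lambda>x. x) (\<lambda>x. x) i j * ((x \<bullet> i) * (x \<bullet> j)))" for x
  proof -
    have "(\<integral>y. (x \<bullet> y)\<^sup>2 \<partial>M) = (\<integral>y. (\<Sum>i\<in>Basis. \<Sum>j\<in>Basis. ((x \<bullet> i) * (x \<bullet> j)) * ((y \<bullet> i) * (y \<bullet> j))) \<partial>M)"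
      by (simp only: inner_sq_expand)
    also have "\<dots> = (\<Sum>i\<in>Basis. \<Sum>j\<in>Basis. ((x \<bullet> i) * (x \<bullet> j)) * mom M (\<lambda>x. x) (\<lambda>x. x) i j)"
      unfolding mom_def by (rule integral_double_sum[where f="\<lambda>i j y. (y \<bullet> i) * (y \<bullet> j)"]) (rule int)
    finally show ?thesis by (simp add: mult.commute)
  qed
  have "PFP M = (\<integral>x. (\<Sum>i\<in>Basis. \<Sum>j\<in>Basis. mom M (\<lambda>x. x) (\<lambda>x. x) i j * ((x \<bullet> i) * (x \<bullet> j))) \<partial>M)"
    unfolding PFP_def inner ..
  also have "\<dots> = (\<Sum>i\<in>Basis. \<Sum>j\<in>Basis. mom M (\<lambda>x. x) (\<lambda>x. x) i j * mom M (\<lambda>x. x) (\<lambda>x. x) i j)"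
    by (subst integral_double_sum[where f="\<lambda>i j y. (y \<bullet> i) * (y \<bullet> j)"]) (auto intro: int simp: mom_def)
  finally show ?thesis .
qed

lemma frame_op_inner:
  fixes M :: "'a::euclidean_space measure"
  assumes "integrable M (\<lambda>x. norm x ^ 2)" "sets M = sets borel"
  shows "frame_op M x \<bullet> v = (\<Sum>i\<in>Basis. \<Sum>j\<in>Basis. ((x \<bullet> i) * (v \<bullet> j)) * mom M (\<lambda>x. x) (\<lambda>x. x) i j)"
proof -
  have meas: "(\<lambda>x. x) \<in> borel_measurable M" using assms(2) by (intro meas_borelI continuous_intros)
  have int: "\<And>i j. i \<in> Basis \<Longrightarrow> j \<in> Basis \<Longrightarrow> integrable M (\<lambda>x. (x \<bullet> i) * (x \<bullet> j))"
    using pair_integrable[OF assms(1) assms(1) meas meas] by blast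
  have ib: "integrable M (\<lambda>y. (y \<bullet> x) *\<^sub>R y)"
  proof (rule Bochner_Integration.integrable_bound[OF integrable_mult_right[OF assms(1), of "norm x"]])
    show "(\<lambda>y. (y \<bullet> x) *\<^sub>R y) \<in> borel_measurable M" using assms(2) by (intro meas_borelI continuous_intros)
    show "AE y in M. norm ((y \<bullet> x) *\<^sub>R y) \<le> norm (norm x * (norm y)\<^sup>2)"
    proof (intro AE_I2)
      fix y
      have "\<bar>y \<bullet> x\<bar> * norm y \<le> (norm y * norm x) * norm y"
        by (intro mult_right_mono Cauchy_Schwarz_ineq2) auto
      moreover have "norm ((y \<bullet> x) *\<^sub>R y) = \<bar>y \<bullet> x\<bar> * norm y" by simp
      moreover have "norm (norm x * (norm y)\<^sup>2) = norm x * (norm y)\<^sup>2" by simp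
      moreover have "norm x * (norm y)\<^sup>2 = (norm y * norm x) * norm y"
        by (simp add: power2_eq_square mult.commute mult.left_commute)
      ultimately show "norm ((y \<bullet> x) *\<^sub>R y) \<le> norm (norm x * (norm y)\<^sup>2)"
        by argo
    qed
  qed
  have "frame_op M x \<bullet> v = (\<integral>y. ((y \<bullet> x) *\<^sub>R y) \<bullet> v \<partial>M)"
    unfolding frame_op_def
    by (rule integral_bounded_linear[OF bounded_linear_inner_left ib, symmetric])
  also have "\<dots> = (\<integral>y. (\<Sum>i\<in>Basis. \<Sum>j\<in>Basis. ((x \<bullet> i) * (v \<bullet> j)) * ((y \<bullet> i) * (y \<bullet> j))) \<partial>M)"
    by (intro Bochner_Integration.integral_cong refl) (simp only: inner_scaleR_left, rule inner_prod_expand)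
  also have "\<dots> = (\<Sum>i\<in>Basis. \<Sum>j\<in>Basis. ((x \<bullet> i) * (v \<bullet> j)) * mom M (\<lambda>x. x) (\<lambda>x. x) i j)"
    unfolding mom_def by (rule integral_double_sum[where f="\<lambda>i j y. (y \<bullet> i) * (y \<bullet> j)"]) (rule int)
  finally show ?thesis .
qed

lemma frame_op_explicit:
  fixes M :: "'a::euclidean_space measure"
  assumes "integrable M (\<lambda>x. norm x ^ 2)" "sets M = sets borel"
  shows "frame_op M = (\<lambda>x. \<Sum>b\<in>Basis. (\<Sum>i\<in>Basis. (x \<bullet> i) * mom M (\<lambda>x. x) (\<lambda>x. x) i b) *\<^sub>R b)"
proof
  fix x
  show "frame_op M x = (\<Sum>b\<in>Basis. (\<Sum>i\<in>Basis. (x \<bullet> i) * mom M (\<lambda>x. x) (\<lambda>x. x) i b) *\<^sub>R b)"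
  proof (rule euclidean_eqI)
    fix b :: 'a assume b: "b \<in> Basis"
    have "frame_op M x \<bullet> b = (\<Sum>i\<in>Basis. \<Sum>j\<in>Basis. ((x \<bullet> i) * (b \<bullet> j)) * mom M (\<lambda>x. x) (\<lambda>x. x) i j)"
      by (rule frame_op_inner[OF assms])
    also have "\<dots> = (\<Sum>i\<in>Basis. (x \<bullet> i) * mom M (\<lambda>x. x) (\<lambda>x. x) i b)"
    proof (intro sum.cong refl)
      fix i :: 'a assume "i \<in> Basis"
      have "(\<Sum>j\<in>Basis. ((x \<bullet> i) * (b \<bullet> j)) * mom M (\<lambda>x. x) (\<lambda>x. x) i j)
          = (\<Sum>j\<in>Basis. if j = b then (x \<bullet> i) * mom M (\<lambda>x. x) (\<lambda>x. x) i j else 0)"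
        using b by (intro sum.cong refl) (auto simp: inner_Basis)
      also have "\<dots> = (x \<bullet> i) * mom M (\<lambda>x. x) (\<lambda>x. x) i b" using b by (simp add: sum.delta')
      finally show "(\<Sum>j\<in>Basis. ((x \<bullet> i) * (b \<bullet> j)) * mom M (\<lambda>x. x) (\<lambda>x. x) i j) = (x \<bullet> i) * mom M (\<lambda>x. x) (\<lambda>x. x) i b" .
    qed
    also have "\<dots> = (\<Sum>c\<in>Basis. (\<Sum>i\<in>Basis. (x \<bullet> i) * mom M (\<lambda>x. x) (\<lambda>x. x) i c) *\<^sub>R c) \<bullet> b"
      using b by (simp add: inner_sum_left inner_Basis if_distrib cong: if_cong)
    finally show "frame_op M x \<bullet> b = (\<Sum>c\<in>Basis. (\<Sum>i\<in>Basis. (x \<bullet> i) * mom M (\<lambda>x. x) (\<lambda>x. x) i c) *\<^sub>R c) \<bullet> b" .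
  qed
qed


lemma cs_int:
  fixes f g :: "'m \<Rightarrow> real"
  assumes i1: "integrable M (\<lambda>x. (f x)^2)" and i2: "integrable M (\<lambda>x. (g x)^2)"
    and i3: "integrable M (\<lambda>x. f x * g x)"
  shows "(\<integral>x. f x * g x \<partial>M)^2 \<le> ((\<integral>x. (f x)^2 \<partial>M) + 1) * (\<integral>x. (g x)^2 \<partial>M)"
proof -
  define A where "A = (\<integral>x. (f x)^2 \<partial>M)"
  define B where "B = (\<integral>x. f x * g x \<partial>M)"
  define C where "C = (\<integral>x. (g x)^2 \<partial>M)"
  define t where "t = B / (A + 1)"
  have A0: "A \<ge> 0" unfolding A_def by (intro integral_nonneg_AE) auto
  have tA: "t * (A + 1) = B" unfolding t_def using A0 by simp
  have "0 \<le> (\<integral>x. (t * f x - g x)^2 \<partial>M)" by (intro integral_nonneg_AE) auto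
  also have "\<dots> = (\<integral>x. t^2 * (f x)^2 + (- 2 * t) * (f x * g x) + (g x)^2 \<partial>M)"
    by (intro Bochner_Integration.integral_cong refl) (simp add: power2_eq_square algebra_simps)
  also have "\<dots> = t^2 * A + (- 2 * t) * B + C"
  proof -
    have a: "integrable M (\<lambda>x. t^2 * (f x)^2)" using i1 by simp
    have b: "integrable M (\<lambda>x. (- 2 * t) * (f x * g x))" using i3 by simp
    have "(\<integral>x. t^2 * (f x)^2 + (- 2 * t) * (f x * g x) + (g x)^2 \<partial>M)
        = (\<integral>x. t^2 * (f x)^2 + (- 2 * t) * (f x * g x) \<partial>M) + (\<integral>x. (g x)^2 \<partial>M)"
      by (rule Bochner_Integration.integral_add[OF Bochner_Integration.integrable_add[OF a b] i2])
    also have "(\<integral>x. t^2 * (f x)^2 + (- 2 * t) * (f x * g x) \<partial>M)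
        = (\<integral>x. t^2 * (f x)^2 \<partial>M) + (\<integral>x. (- 2 * t) * (f x * g x) \<partial>M)"
      by (rule Bochner_Integration.integral_add[OF a b])
    finally show ?thesis unfolding A_def B_def C_def by simp
  qed
  finally have "0 \<le> t^2 * A + (- 2 * t) * B + C" .
  moreover have "t^2 * (A + 1) = t^2 * A + t^2" by (simp add: distrib_left)
  ultimately have "0 \<le> t^2 * (A + 1) - 2 * t * B + C" using zero_le_power2[of t] by linarith
  also have "t^2 * (A + 1) = t * B" using tA by (simp add: power2_eq_square)
  finally have "t * B \<le> C" by (simp add: mult.commute)
  then have h1: "t * B * (A + 1) \<le> C * (A + 1)" using A0 by (intro mult_right_mono) auto
  have h2: "t * B * (A + 1) = B * B" using tA by (metis mult.commute mult.assoc)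
  have "B * B \<le> C * (A + 1)" using h1 h2 by linarith
  then have "B * B \<le> (A + 1) * C" by (simp only: mult.commute)
  then show ?thesis unfolding A_def B_def C_def by (simp add: power2_eq_square)
qed


lemma tangent_powr:
  fixes r c x :: real
  assumes r: "r \<ge> 1" and c: "c > 0" and x: "x \<ge> 0"
  shows "c powr r + r * c powr (r - 1) * (x - c) \<le> x powr r"
proof (cases "x = 0")
  case True
  have "c powr (r - 1) * c powr 1 = c powr (r - 1 + 1)" by (rule powr_add[symmetric])
  then have "c powr (r - 1) * c = c powr r" using c by simp
  then have "c powr r + r * c powr (r - 1) * (x - c) = c powr r * (1 - r)"
    using True by (simp add: algebra_simps)
  also have "\<dots> \<le> 0" using r by (intro mult_nonneg_nonpos) auto
  finally show ?thesis using True by simp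
next
  case False
  then have xp: "x > 0" using x by simp
  have "r * c powr (r - 1) * (x - c) \<le> x powr r - c powr r"
    using c xp
    by (intro convex_on_imp_above_tangent[where A = "{0<..}", OF powr_convex[OF r]])
       (auto intro!: derivative_eq_intros simp: interior_open)
  then show ?thesis by simp
qed


lemma lyapunov:
  fixes h :: "'m \<Rightarrow> real"
  assumes ps: "prob_space M" and p: "p \<ge> 2" and h0: "\<And>x. h x \<ge> 0"
    and i2: "integrable M (\<lambda>x. (h x)^2)" and ip: "integrable M (\<lambda>x. h x powr p)"
  shows "(\<integral>x. (h x)^2 \<partial>M) \<le> (\<integral>x. h x powr p \<partial>M) powr (2 / p)"
proof -
  define c where "c = (\<integral>x. (h x)^2 \<partial>M)"
  have c0: "c \<ge> 0" unfolding c_def by (intro integral_nonneg_AE) auto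
  show ?thesis
  proof (cases "c = 0")
    case True then show ?thesis unfolding c_def[symmetric] by simp
  next
    case False
    then have cp: "c > 0" using c0 by simp
    define r where "r = p / 2"
    have r1: "r \<ge> 1" using p unfolding r_def by simp
    define k where "k = r * c powr (r - 1)"
    have pw: "h x powr p = ((h x)^2) powr r" for x
    proof -
      have "h x powr 2 = (h x)^2" using h0[of x] by (simp add: powr_realpow')
      then have "((h x)^2) powr r = h x powr (2 * r)" by (metis powr_powr)
      then show ?thesis unfolding r_def by simp
    qed
    have "(\<integral>x. c powr r + k * ((h x)^2 - c) \<partial>M) \<le> (\<integral>x. h x powr p \<partial>M)"
    proof (rule integral_mono)
      show "integrable M (\<lambda>x. c powr r + k * ((h x)^2 - c))"
        using i2 prob_space.finite_measure[OF ps]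
        by (intro Bochner_Integration.integrable_add Bochner_Integration.integrable_diff
              integrable_mult_right finite_measure.integrable_const) auto
      show "integrable M (\<lambda>x. h x powr p)" by fact
      fix x show "c powr r + k * ((h x)^2 - c) \<le> h x powr p"
        unfolding pw k_def by (rule tangent_powr[OF r1 cp]) simp
    qed
    also have "(\<integral>x. c powr r + k * ((h x)^2 - c) \<partial>M) = c powr r"
    proof -
      have fm: "finite_measure M" using ps by (rule prob_space.finite_measure)
      have ic: "integrable M (\<lambda>x. c)" for c :: real using fm by (rule finite_measure.integrable_const)
      have i3: "integrable M (\<lambda>x. k * ((h x)^2 - c))"
        by (intro integrable_mult_right Bochner_Integration.integrable_diff i2 ic)
      have "(\<integral>x. c powr r + k * ((h x)^2 - c) \<partial>M) = (\<integral>x. c powr r \<partial>M) + (\<integral>x. k * ((h x)^2 - c) \<partial>M)"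
        by (rule Bochner_Integration.integral_add[OF ic i3])
      also have "(\<integral>x. k * ((h x)^2 - c) \<partial>M) = k * ((\<integral>x. (h x)^2 \<partial>M) - (\<integral>x. c \<partial>M))"
        by (simp add: Bochner_Integration.integral_diff[OF i2 ic])
      finally have eq: "(\<integral>x. c powr r + k * ((h x)^2 - c) \<partial>M) = (\<integral>x. c powr r \<partial>M) + k * ((\<integral>x. (h x)^2 \<partial>M) - (\<integral>x. c \<partial>M))" .
      have ci: "(\<integral>x. d \<partial>M) = d" for d :: real using prob_space.prob_space[OF ps] by simp
      show ?thesis unfolding eq ci c_def[symmetric] by simp
    qed
    finally have "c powr r \<le> (\<integral>x. h x powr p \<partial>M)" .
    then have "(c powr r) powr (2 / p) \<le> (\<integral>x. h x powr p \<partial>M) powr (2 / p)"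
      using p by (intro powr_mono2) auto
    moreover have "(c powr r) powr (2 / p) = c" using p cp unfolding r_def by (simp add: powr_powr)
    ultimately show ?thesis unfolding c_def by simp
  qed
qed


lemma mom_abs_le:
  fixes u v :: "'m \<Rightarrow> 'a::euclidean_space"
  assumes "integrable M (\<lambda>x. (u x \<bullet> i) * (v x \<bullet> j))" "integrable M (\<lambda>x. norm (u x) * norm (v x))"
    "i \<in> Basis" "j \<in> Basis"
  shows "\<bar>mom M u v i j\<bar> \<le> (\<integral>x. norm (u x) * norm (v x) \<partial>M)"
  unfolding mom_def
proof -
  have "norm (\<integral>x. (u x \<bullet> i) * (v x \<bullet> j) \<partial>M) \<le> (\<integral>x. norm (u x) * norm (v x) \<partial>M)"
  proof (rule order_trans[OF integral_norm_bound integral_mono])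
    show "integrable M (\<lambda>x. norm ((u x \<bullet> i) * (v x \<bullet> j)))" using assms(1) by (rule integrable_norm)
    show "integrable M (\<lambda>x. norm (u x) * norm (v x))" by (rule assms(2))
    fix x show "norm ((u x \<bullet> i) * (v x \<bullet> j)) \<le> norm (u x) * norm (v x)"
      unfolding norm_mult real_norm_def abs_mult using Basis_le_norm[OF assms(3), of "u x"] Basis_le_norm[OF assms(4), of "v x"]
      by (intro mult_mono) auto
  qed
  then show "\<bar>\<integral>x. (u x \<bullet> i) * (v x \<bullet> j) \<partial>M\<bar> \<le> (\<integral>x. norm (u x) * norm (v x) \<partial>M)" by simp
qed

lemma remainder_bound:
  fixes M :: "'m measure" and a b :: "'m \<Rightarrow> 'a::euclidean_space"
  assumes am: "a \<in> borel_measurable M" and bm: "b \<in> borel_measurable M"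
    and ia: "integrable M (\<lambda>x. norm (a x) ^ 2)" and ib: "integrable M (\<lambda>x. norm (b x) ^ 2)"
  shows "\<bar>(\<Sum>i\<in>Basis. \<Sum>j\<in>Basis. mom M b b i j * mom M b b i j)
          - (\<Sum>i\<in>Basis. \<Sum>j\<in>Basis. mom M a a i j * mom M a a i j)
          - 4 * (\<Sum>i\<in>Basis. \<Sum>j\<in>Basis. mom M a a i j * mom M a (\<lambda>x. b x - a x) i j)\<bar>
    \<le> (real DIM('a))^2 * (10 * (\<integral>x. norm (a x) ^ 2 \<partial>M) + 10)
        * ((\<integral>x. norm (b x - a x) ^ 2 \<partial>M) + (\<integral>x. norm (b x - a x) ^ 2 \<partial>M)^2)"
proof -
  define e where "e = (\<lambda>x. b x - a x)"
  define M1 where "M1 = (\<integral>x. norm (a x) ^ 2 \<partial>M)"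
  define c2 where "c2 = (\<integral>x. norm (e x) ^ 2 \<partial>M)"
  define B where "B = (\<integral>x. norm (a x) * norm (e x) \<partial>M)"
  define m where "m = mom M a a"
  define mb where "mb = mom M b b"
  define N where "N = mom M a e"
  define E where "E = mom M e e"
  define D where "D = (\<lambda>i j. N i j + N j i + E i j)"
  have em: "e \<in> borel_measurable M" unfolding e_def by (intro borel_measurable_diff bm am)
  have ie: "integrable M (\<lambda>x. norm (e x) ^ 2)"
  proof -
    have i: "integrable M (\<lambda>x. 2 * norm (a x) ^ 2 + 2 * norm (b x) ^ 2)" using ia ib by simp
    show ?thesis
    proof (rule Bochner_Integration.integrable_bound[OF i])
      show "(\<lambda>x. norm (e x) ^ 2) \<in> borel_measurable M"
        by (rule borel_measurable_continuous_on[OF _ em, where f="\<lambda>z. norm z ^ 2"]) (intro continuous_intros)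
      show "AE x in M. norm (norm (e x) ^ 2) \<le> norm (2 * norm (a x) ^ 2 + 2 * norm (b x) ^ 2)"
      proof (intro AE_I2)
        fix x
        have "norm (e x) \<le> norm (a x) + norm (b x)" unfolding e_def
          by (metis add.commute norm_triangle_ineq4)
        then have "norm (e x) ^ 2 \<le> (norm (a x) + norm (b x)) ^ 2" by (intro power_mono) auto
        also have "\<dots> \<le> 2 * norm (a x) ^ 2 + 2 * norm (b x) ^ 2"
          using sum_squares_bound[of "norm (a x)" "norm (b x)"] by (simp add: power2_sum)
        finally show "norm (norm (e x) ^ 2) \<le> norm (2 * norm (a x) ^ 2 + 2 * norm (b x) ^ 2)" by simp
      qed
    qed
  qed
  have iae: "integrable M (\<lambda>x. norm (a x) * norm (e x))"
    by (rule prod_integrable[OF ia ie]) (use am em in \<open>auto intro!: borel_measurable_times borel_measurable_continuous_on[where f=norm] continuous_intros\<close>)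
  have M10: "M1 \<ge> 0" unfolding M1_def by (intro integral_nonneg_AE) auto
  have c20: "c2 \<ge> 0" unfolding c2_def by (intro integral_nonneg_AE) auto
  have CS: "B^2 \<le> (M1 + 1) * c2"
    using cs_int[of M "\<lambda>x. norm (a x)" "\<lambda>x. norm (e x)"] ia ie iae
    unfolding B_def M1_def c2_def by simp
  have pint: "\<And>u v i j. u \<in> {a, e} \<Longrightarrow> v \<in> {a, e} \<Longrightarrow> i \<in> Basis \<Longrightarrow> j \<in> Basis \<Longrightarrow>
      integrable M (\<lambda>x. (u x \<bullet> i) * (v x \<bullet> j))"
  proof -
    fix u v and i j :: 'a assume "u \<in> {a, e}" "v \<in> {a, e}" "i \<in> Basis" "j \<in> Basis"
    then show "integrable M (\<lambda>x. (u x \<bullet> i) * (v x \<bullet> j))"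
      using pair_integrable[OF _ _ _ _ \<open>i \<in> Basis\<close> \<open>j \<in> Basis\<close>] ia ie am em by auto
  qed
  have Dm: "mb i j = m i j + D i j" if "i \<in> Basis" "j \<in> Basis" for i j
  proof -
    have "mb i j = (\<integral>x. ((a x \<bullet> i) * (a x \<bullet> j) + (a x \<bullet> i) * (e x \<bullet> j)) + ((a x \<bullet> j) * (e x \<bullet> i) + (e x \<bullet> i) * (e x \<bullet> j)) \<partial>M)"
      unfolding mb_def mom_def
      by (intro Bochner_Integration.integral_cong refl) (simp add: e_def inner_diff_left algebra_simps)
    also have "\<dots> = m i j + N i j + (N j i + E i j)"
      unfolding m_def N_def E_def mom_def
      using pint[of a a i j] pint[of a e i j] pint[of a e j i] pint[of e e i j] that
      by (simp add: Bochner_Integration.integral_add)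
    finally show ?thesis unfolding D_def by simp
  qed
  have msym: "m i j = m j i" for i j unfolding m_def mom_def by (simp add: mult.commute)
  have swap: "(\<Sum>i\<in>Basis. \<Sum>j\<in>Basis. m i j * N j i) = (\<Sum>i\<in>Basis. \<Sum>j\<in>Basis. m i j * N i j)"
    by (subst sum.swap) (simp add: msym)
  have "(\<Sum>i\<in>Basis. \<Sum>j\<in>Basis. mb i j * mb i j) - (\<Sum>i\<in>Basis. \<Sum>j\<in>Basis. m i j * m i j)
          - 4 * (\<Sum>i\<in>Basis. \<Sum>j\<in>Basis. m i j * N i j)
      = (\<Sum>i\<in>Basis. \<Sum>j\<in>Basis. (2 * m i j * E i j + D i j * D i j) + 2 * (m i j * N j i) - 2 * (m i j * N i j))"
    by (simp add: Dm D_def sum_subtractf sum.distrib sum_distrib_left algebra_simps)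
  also have "\<dots> = (\<Sum>i\<in>Basis. \<Sum>j\<in>Basis. 2 * m i j * E i j + D i j * D i j)"
    by (simp add: sum_subtractf sum.distrib sum_distrib_left[symmetric] swap)
  finally have eq: "(\<Sum>i\<in>Basis. \<Sum>j\<in>Basis. mb i j * mb i j) - (\<Sum>i\<in>Basis. \<Sum>j\<in>Basis. m i j * m i j)
          - 4 * (\<Sum>i\<in>Basis. \<Sum>j\<in>Basis. m i j * N i j)
      = (\<Sum>i\<in>Basis. \<Sum>j\<in>Basis. 2 * m i j * E i j + D i j * D i j)" .
  define K where "K = (10 * M1 + 10) * (c2 + c2^2)"
  have tm: "\<bar>2 * m i j * E i j + D i j * D i j\<bar> \<le> K" if ij: "i \<in> Basis" "j \<in> Basis" for i j
  proof -
    have bmm: "\<bar>m i j\<bar> \<le> M1"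
      using mom_abs_le[of M a i a j] pint[of a a i j] ij ia unfolding m_def M1_def by (simp add: power2_eq_square)
    have bE: "\<bar>E i j\<bar> \<le> c2"
      using mom_abs_le[of M e i e j] pint[of e e i j] ij ie unfolding E_def c2_def by (simp add: power2_eq_square)
    have bN: "\<bar>N u v\<bar> \<le> B" if "u \<in> Basis" "v \<in> Basis" for u v
      using mom_abs_le[of M a u e v] pint[of a e u v] that iae unfolding N_def B_def by simp
    have "\<bar>D i j\<bar> \<le> 2 * B + c2" unfolding D_def using bN[OF ij] bN[OF ij(2,1)] bE by linarith
    then have "D i j * D i j \<le> (2 * B + c2)^2"
      by (metis abs_mult_self_eq abs_ge_zero power_mono power2_eq_square)
    also have "\<dots> \<le> 8 * B^2 + 2 * c2^2"
      using sum_squares_bound[of "2*B" c2] by (simp add: power2_sum power_mult_distrib)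
    finally have d: "D i j * D i j \<le> 8 * ((M1 + 1) * c2) + 2 * c2^2" using CS by linarith
    have "\<bar>2 * m i j * E i j\<bar> \<le> 2 * (M1 * c2)"
      using mult_mono[OF bmm bE] M10 by (simp add: abs_mult)
    moreover have "\<bar>2 * m i j * E i j + D i j * D i j\<bar> \<le> \<bar>2 * m i j * E i j\<bar> + \<bar>D i j * D i j\<bar>"
      by (rule abs_triangle_ineq)
    moreover have "\<bar>D i j * D i j\<bar> = D i j * D i j" by simp
    moreover have "0 \<le> M1 * c2^2" using M10 by simp
    moreover have "0 \<le> M1 * c2" using M10 c20 by simp
    moreover have "0 \<le> c2^2" by simp
    moreover have "8 * ((M1 + 1) * c2) = 8 * (M1 * c2) + 8 * c2" by (simp add: algebra_simps)
    moreover have "K = 10 * (M1 * c2) + 10 * c2 + 10 * (M1 * c2^2) + 10 * c2^2"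
      unfolding K_def by (simp add: algebra_simps)
    ultimately show ?thesis using d c20 by linarith
  qed
  have "\<bar>\<Sum>i\<in>Basis. \<Sum>j\<in>Basis. 2 * m i j * E i j + D i j * D i j\<bar>
      \<le> (\<Sum>i\<in>Basis. \<Sum>j\<in>Basis. \<bar>2 * m i j * E i j + D i j * D i j\<bar>)"
    by (rule order_trans[OF sum_abs sum_mono]) (rule sum_abs)
  also have "\<dots> \<le> (\<Sum>i\<in>(Basis::'a set). \<Sum>j\<in>(Basis::'a set). K)"
    by (intro sum_mono tm) auto
  also have "\<dots> = (real DIM('a))^2 * K" by (simp add: power2_eq_square)
  finally show ?thesis
    using eq unfolding K_def M1_def c2_def e_def m_def mb_def N_def by simp
qed



lemma powr_diff_bound:
  fixes x y :: "'a::real_normed_vector" and p :: real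
  assumes "p > 0"
  shows "norm (y - x) powr p \<le> 2 powr p * (norm x powr p + norm y powr p)"
proof -
  define M where "M = max (norm x) (norm y)"
  have "norm (y - x) \<le> norm x + norm y" by (metis add.commute norm_triangle_ineq4)
  also have "\<dots> \<le> 2 * M" unfolding M_def by simp
  finally have "norm (y - x) powr p \<le> (2 * M) powr p" using assms by (intro powr_mono2) auto
  also have "\<dots> = 2 powr p * M powr p" unfolding M_def by (simp add: powr_mult)
  also have "M powr p \<le> norm x powr p + norm y powr p" unfolding M_def
    by (cases "norm x \<le> norm y") (auto simp: max_def)
  finally show ?thesis by simp
qed

theorem mainTheorem6:
  fixes p :: real and \<mu> :: "'a::euclidean_space measure"
  assumes "p \<ge> 2" and "\<mu> \<in> Pp p"
  shows "strongly_diff p PFP \<mu> (distr \<mu> borel (\<lambda>x. (x, 4 *\<^sub>R frame_op \<mu> x)))"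
proof -
  have p2: "p \<ge> 2" by fact
  have ps\<mu>: "prob_space \<mu>" and sets\<mu>: "sets \<mu> = sets borel" and ip\<mu>: "integrable \<mu> (\<lambda>x. norm x powr p)"
    using assms(2) unfolding Pp_def by auto
  have fm\<mu>: "finite_measure \<mu>" using ps\<mu> by (rule prob_space.finite_measure)
  have idm: "(\<lambda>x. x) \<in> borel_measurable \<mu>" using sets\<mu> by (intro meas_borelI continuous_intros)
  have i2\<mu>: "integrable \<mu> (\<lambda>x. norm x ^ 2)"
    using sq_integrable[OF fm\<mu> idm _ p2] ip\<mu> by simp
  define m where "m = mom \<mu> (\<lambda>x. x) (\<lambda>x. x)"
  define S where "S = frame_op \<mu>"
  have Sform: "S = (\<lambda>x. \<Sum>b\<in>Basis. (\<Sum>i\<in>Basis. (x \<bullet> i) * m i b) *\<^sub>R b)"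
    unfolding S_def m_def by (rule frame_op_explicit[OF i2\<mu> sets\<mu>])
  have Sbl: "bounded_linear S" unfolding Sform by (intro bounded_linear_intros)
  have Sinner: "S x \<bullet> v = (\<Sum>i\<in>Basis. \<Sum>j\<in>Basis. ((x \<bullet> i) * (v \<bullet> j)) * m i j)" for x v
    unfolding S_def m_def by (rule frame_op_inner[OF i2\<mu> sets\<mu>])
  define g where "g = (\<lambda>x::'a. (x, 4 *\<^sub>R S x))"
  have gc: "continuous_on UNIV g" unfolding g_def Sform by (intro continuous_intros)
  have gm: "g \<in> borel_measurable \<mu>" using sets\<mu> gc by (rule meas_borelI)
  define \<gamma> where "\<gamma> = distr \<mu> borel g"
  have \<gamma>eq: "distr \<mu> borel (\<lambda>x. (x, 4 *\<^sub>R frame_op \<mu> x)) = \<gamma>" unfolding \<gamma>_def g_def S_def ..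
  define q where "q = p / (p - 1)"
  have q1: "1 \<le> q" and q2: "q \<le> 2" using p2 unfolding q_def by (auto simp: field_simps)
  define KK where "KK = (real DIM('a))^2 * (10 * (\<integral>x. norm x ^ 2 \<partial>\<mu>) + 10)"
  have KK0: "KK \<ge> 0" unfolding KK_def by (intro mult_nonneg_nonneg integral_nonneg_AE add_nonneg_nonneg) auto
  define \<omega> where "\<omega> = (\<lambda>r::real. KK * (r^2 + (r^2)^2))"
  have part1: "prob_space \<gamma>" unfolding \<gamma>_def by (rule prob_space.prob_space_distr[OF ps\<mu> gm])
  have part2: "sets \<gamma> = sets borel" unfolding \<gamma>_def by simp
  have part3: "distr \<gamma> borel fst = \<mu>"
  proof -
    have fm: "fst \<in> measurable borel (borel :: 'a measure)"
      by (intro borel_measurable_continuous_onI continuous_intros)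
    have "distr \<gamma> borel fst = distr \<mu> borel (fst \<circ> g)" unfolding \<gamma>_def
      by (rule distr_distr[OF fm gm])
    also have "fst \<circ> g = (\<lambda>x. x)" unfolding g_def by (simp add: comp_def)
    also have "distr \<mu> borel (\<lambda>x. x) = \<mu>" using sets\<mu> by (intro distr_id2) simp
    finally show ?thesis .
  qed
  have part4: "integrable \<gamma> (\<lambda>(x1, x2). norm x2 powr (p / (p - 1)))"
  proof -
    have feq: "(\<lambda>(x1::'a, x2::'a). norm x2 powr (p / (p - 1))) = (\<lambda>z. norm (snd z) powr q)"
      unfolding q_def by (simp add: fun_eq_iff split_beta)
    have fmeas: "(\<lambda>z::'a \<times> 'a. norm (snd z) powr q) \<in> borel_measurable borel"
      by (intro powr_real_measurable borel_measurable_continuous_onI continuous_intros borel_measurable_const)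
    obtain K where K: "K > 0" "\<And>x. norm (S x) \<le> norm x * K"
      using bounded_linear.pos_bounded[OF Sbl] by blast
    have "integrable \<mu> (\<lambda>x. norm (snd (g x)) powr q)"
    proof (rule Bochner_Integration.integrable_bound)
      show "integrable \<mu> (\<lambda>x. 1 + (4 * K)^2 * norm x ^ 2)"
        using i2\<mu> fm\<mu> by (intro Bochner_Integration.integrable_add integrable_mult_right finite_measure.integrable_const) auto
      show "(\<lambda>x. norm (snd (g x)) powr q) \<in> borel_measurable \<mu>"
        using sets\<mu> fmeas measurable_comp[OF gm fmeas] by (simp add: comp_def)
      show "AE x in \<mu>. norm (norm (snd (g x)) powr q) \<le> norm (1 + (4 * K)^2 * norm x ^ 2)"
      proof (intro AE_I2)
        fix x
        have n: "norm (snd (g x)) \<le> 4 * K * norm x" unfolding g_def using K(2)[of x] by (simp add: mult_ac)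
        have "norm (snd (g x)) powr q \<le> 1 + (norm (snd (g x)))^2" by (rule sq_le_powr[OF _ q1 q2]) simp
        also have "(norm (snd (g x)))^2 \<le> (4 * K * norm x)^2" using n by (intro power_mono) auto
        also have "(4 * K * norm x)^2 = (4 * K)^2 * norm x ^ 2" by (simp add: power_mult_distrib)
        finally show "norm (norm (snd (g x)) powr q) \<le> norm (1 + (4 * K)^2 * norm x ^ 2)" by simp
      qed
    qed
    then show ?thesis unfolding feq \<gamma>_def by (subst integrable_distr_eq[OF gm fmeas])
  qed
  have part5: "((\<lambda>r. \<omega> r / r) \<longlongrightarrow> 0) (at_right 0)"
  proof -
    have "((\<lambda>r::real. KK * (r + r^3)) \<longlongrightarrow> KK * (0 + 0^3)) (at_right 0)"
      by (intro tendsto_intros)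
    then have lim: "((\<lambda>r::real. KK * (r + r^3)) \<longlongrightarrow> 0) (at_right 0)" by simp
    have ev: "eventually (\<lambda>r::real. KK * (r + r^3) = \<omega> r / r) (at_right 0)"
      using eventually_at_right_less[of "0::real"]
    proof (rule eventually_mono)
      fix r :: real assume "0 < r"
      then show "KK * (r + r^3) = \<omega> r / r" unfolding \<omega>_def
        by (simp add: field_simps power2_eq_square power3_eq_cube)
    qed
    show ?thesis by (rule Lim_transform_eventually[OF lim ev])
  qed
  have part6: "\<bar>PFP \<nu> - PFP \<mu> - (\<integral>(x1, x2, x3). x2 \<bullet> (x3 - x1) \<partial>\<beta>)\<bar> \<le> \<omega> (Cpb p \<beta>)"
    if \<nu>P: "\<nu> \<in> Pp p" and \<beta>G: "\<beta> \<in> Gamma \<gamma> \<nu>" for \<nu> \<beta>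
  proof -
    have ps\<nu>: "prob_space \<nu>" and sets\<nu>: "sets \<nu> = sets borel" and ip\<nu>: "integrable \<nu> (\<lambda>x. norm x powr p)"
      using \<nu>P unfolding Pp_def by auto
    have ps\<beta>: "prob_space \<beta>" and sets\<beta>: "sets \<beta> = sets borel"
      and d12': "distr \<beta> borel (\<lambda>(x1, x2, x3). (x1, x2)) = \<gamma>"
      and d3': "distr \<beta> borel (\<lambda>(x1, x2, x3). x3) = \<nu>"
      using \<beta>G unfolding Gamma_def by auto
    define \<pi>12 where "\<pi>12 = (\<lambda>t::'a \<times> 'a \<times> 'a. (fst t, fst (snd t)))"
    define X3 where "X3 = (\<lambda>t::'a \<times> 'a \<times> 'a. snd (snd t))"
    have e12: "(\<lambda>(x1::'a, x2::'a, x3::'a). (x1, x2)) = \<pi>12" unfolding \<pi>12_def by (simp add: fun_eq_iff split_beta)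
    have e3: "(\<lambda>(x1::'a, x2::'a, x3::'a). x3) = X3" unfolding X3_def by (simp add: fun_eq_iff split_beta)
    have d12: "distr \<beta> borel \<pi>12 = \<gamma>" using d12' unfolding e12 .
    have d3: "distr \<beta> borel X3 = \<nu>" using d3' unfolding e3 .
    have fm\<nu>: "finite_measure \<nu>" using ps\<nu> by (rule prob_space.finite_measure)
    have fm\<beta>: "finite_measure \<beta>" using ps\<beta> by (rule prob_space.finite_measure)
    have \<pi>12m: "\<pi>12 \<in> borel_measurable \<beta>" using sets\<beta> unfolding \<pi>12_def by (intro meas_borelI continuous_intros)
    have X3m: "X3 \<in> borel_measurable \<beta>" using sets\<beta> unfolding X3_def by (intro meas_borelI continuous_intros)
    have X1m: "fst \<in> borel_measurable \<beta>" using sets\<beta> by (intro meas_borelI continuous_intros)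
    have fstb: "fst \<in> measurable borel (borel :: 'a measure)"
      by (intro borel_measurable_continuous_onI continuous_intros)
    have T1: "(integrable \<beta> (\<lambda>t. h (fst t)) \<longleftrightarrow> integrable \<mu> h) \<and> (\<integral>t. h (fst t) \<partial>\<beta>) = integral\<^sup>L \<mu> h"
      if hm: "h \<in> borel_measurable borel" for h :: "'a \<Rightarrow> real"
    proof -
      have hf: "(\<lambda>z. h (fst z)) \<in> borel_measurable (borel :: ('a \<times> 'a) measure)"
        using measurable_comp[OF fstb hm] by (simp add: comp_def)
      have gb: "g \<in> measurable \<mu> borel" by (rule gm)
      have a: "integrable \<gamma> (\<lambda>z. h (fst z)) \<longleftrightarrow> integrable \<beta> (\<lambda>t. h (fst t))"
        unfolding d12[symmetric] by (subst integrable_distr_eq[OF \<pi>12m hf]) (simp add: \<pi>12_def)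
      have b: "integrable \<gamma> (\<lambda>z. h (fst z)) \<longleftrightarrow> integrable \<mu> h"
        unfolding \<gamma>_def by (subst integrable_distr_eq[OF gm hf]) (simp add: g_def)
      have c: "integral\<^sup>L \<gamma> (\<lambda>z. h (fst z)) = (\<integral>t. h (fst t) \<partial>\<beta>)"
        unfolding d12[symmetric] by (subst integral_distr[OF \<pi>12m hf]) (simp add: \<pi>12_def)
      have d: "integral\<^sup>L \<gamma> (\<lambda>z. h (fst z)) = integral\<^sup>L \<mu> h"
        unfolding \<gamma>_def by (subst integral_distr[OF gm hf]) (simp add: g_def)
      show ?thesis using a b c d by simp
    qed
    have T3: "(integrable \<beta> (\<lambda>t. h (X3 t)) \<longleftrightarrow> integrable \<nu> h) \<and> (\<integral>t. h (X3 t) \<partial>\<beta>) = integral\<^sup>L \<nu> h"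
      if hm: "h \<in> borel_measurable borel" for h :: "'a \<Rightarrow> real"
    proof -
      have a: "integrable \<nu> h \<longleftrightarrow> integrable \<beta> (\<lambda>t. h (X3 t))"
        unfolding d3[symmetric] by (rule integrable_distr_eq[OF X3m hm])
      have c: "integral\<^sup>L \<nu> h = (\<integral>t. h (X3 t) \<partial>\<beta>)"
        unfolding d3[symmetric] by (rule integral_distr[OF X3m hm])
      show ?thesis using a c by simp
    qed
    have sqm: "(\<lambda>x::'a. norm x ^ 2) \<in> borel_measurable borel"
      by (intro borel_measurable_continuous_onI continuous_intros)
    have pwm: "(\<lambda>x::'a. norm x powr p) \<in> borel_measurable borel"
      by (intro powr_real_measurable borel_measurable_continuous_onI continuous_intros borel_measurable_const)
    have ijm: "(\<lambda>x::'a. (x \<bullet> i) * (x \<bullet> j)) \<in> borel_measurable borel" for i j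
      by (intro borel_measurable_continuous_onI continuous_intros)
    have idm\<nu>: "(\<lambda>x. x) \<in> borel_measurable \<nu>" using sets\<nu> by (intro meas_borelI continuous_intros)
    have i2\<nu>: "integrable \<nu> (\<lambda>x. norm x ^ 2)"
      using sq_integrable[OF fm\<nu> idm\<nu> _ p2] ip\<nu> by simp
    have ia: "integrable \<beta> (\<lambda>t. norm (fst t) ^ 2)" using T1[OF sqm] i2\<mu> by simp
    have ib: "integrable \<beta> (\<lambda>t. norm (X3 t) ^ 2)" using T3[OF sqm] i2\<nu> by simp
    have M1eq: "(\<integral>t. norm (fst t) ^ 2 \<partial>\<beta>) = (\<integral>x. norm x ^ 2 \<partial>\<mu>)" using T1[OF sqm] by simp
    have momA: "mom \<beta> fst fst i j = m i j" for i j
      using T1[OF ijm[of i j]] unfolding mom_def m_def by simp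
    have momB: "mom \<beta> X3 X3 i j = mom \<nu> (\<lambda>x. x) (\<lambda>x. x) i j" for i j
      using T3[OF ijm[of i j]] unfolding mom_def by simp
    have PFP\<mu>: "PFP \<mu> = (\<Sum>i\<in>Basis. \<Sum>j\<in>Basis. mom \<beta> fst fst i j * mom \<beta> fst fst i j)"
      unfolding momA m_def by (rule PFP_expand[OF i2\<mu> sets\<mu>])
    have PFP\<nu>: "PFP \<nu> = (\<Sum>i\<in>Basis. \<Sum>j\<in>Basis. mom \<beta> X3 X3 i j * mom \<beta> X3 X3 i j)"
      unfolding momB by (rule PFP_expand[OF i2\<nu> sets\<nu>])
    define e where "e = (\<lambda>t. X3 t - fst t)"
    have em: "e \<in> borel_measurable \<beta>" unfolding e_def by (intro borel_measurable_diff X3m X1m)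
    have ipe: "integrable \<beta> (\<lambda>t. norm (e t) powr p)"
    proof (rule Bochner_Integration.integrable_bound)
      show "integrable \<beta> (\<lambda>t. 2 powr p * (norm (fst t) powr p + norm (X3 t) powr p))"
        using T1[OF pwm] T3[OF pwm] ip\<mu> ip\<nu>
        by (intro integrable_mult_right Bochner_Integration.integrable_add) auto
      show "(\<lambda>t. norm (e t) powr p) \<in> borel_measurable \<beta>"
        using measurable_comp[OF em pwm] by (simp add: comp_def)
      show "AE t in \<beta>. norm (norm (e t) powr p) \<le> norm (2 powr p * (norm (fst t) powr p + norm (X3 t) powr p))"
      proof (intro AE_I2)
        fix t
        have "norm (e t) powr p \<le> 2 powr p * (norm (fst t) powr p + norm (X3 t) powr p)"
          unfolding e_def using p2 by (intro powr_diff_bound) auto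
        then show "norm (norm (e t) powr p) \<le> norm (2 powr p * (norm (fst t) powr p + norm (X3 t) powr p))"
          by simp
      qed
    qed
    have ie: "integrable \<beta> (\<lambda>t. norm (e t) ^ 2)"
      using sq_integrable[OF fm\<beta> em ipe p2] .
    have AE\<gamma>: "AE z in \<gamma>. snd z = 4 *\<^sub>R S (fst z)"
    proof -
      have cl: "{z::'a \<times> 'a. snd z = 4 *\<^sub>R S (fst z)} \<in> sets borel"
        unfolding Sform by (intro borel_closed closed_Collect_eq continuous_intros)
      show ?thesis unfolding \<gamma>_def
        by (subst AE_distr_iff[OF gm]) (use cl in \<open>auto simp: g_def\<close>)
    qed
    have AE\<beta>: "AE t in \<beta>. fst (snd t) = 4 *\<^sub>R S (fst t)"
    proof -
      have "AE z in distr \<beta> borel \<pi>12. snd z = 4 *\<^sub>R S (fst z)" unfolding d12 by (rule AE\<gamma>)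
      from AE_distrD[OF \<pi>12m this] show ?thesis by (simp add: \<pi>12_def)
    qed
    have fe: "(\<lambda>(x1::'a, x2::'a, x3::'a). x2 \<bullet> (x3 - x1)) = (\<lambda>t. fst (snd t) \<bullet> e t)"
      unfolding e_def X3_def by (simp add: fun_eq_iff split_beta)
    have Lrw: "(\<integral>(x1, x2, x3). x2 \<bullet> (x3 - x1) \<partial>\<beta>) = (\<integral>t. fst (snd t) \<bullet> e t \<partial>\<beta>)"
      by (simp only: fe)
    also have "\<dots> = (\<integral>t. (4 *\<^sub>R S (fst t)) \<bullet> e t \<partial>\<beta>)"
    proof (rule integral_cong_AE)
      show "(\<lambda>t. fst (snd t) \<bullet> e t) \<in> borel_measurable \<beta>"
        using sets\<beta> unfolding e_def X3_def by (intro meas_borelI continuous_intros)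
      show "(\<lambda>t. (4 *\<^sub>R S (fst t)) \<bullet> e t) \<in> borel_measurable \<beta>"
        using sets\<beta> unfolding e_def X3_def Sform by (intro meas_borelI continuous_intros)
      show "AE t in \<beta>. fst (snd t) \<bullet> e t = (4 *\<^sub>R S (fst t)) \<bullet> e t"
        using AE\<beta> by eventually_elim simp
    qed
    also have "\<dots> = (\<integral>t. (\<Sum>i\<in>Basis. \<Sum>j\<in>Basis. (4 * m i j) * ((fst t \<bullet> i) * (e t \<bullet> j))) \<partial>\<beta>)"
      by (intro Bochner_Integration.integral_cong refl)
         (simp add: Sinner sum_distrib_left mult_ac)
    also have "\<dots> = (\<Sum>i\<in>Basis. \<Sum>j\<in>Basis. (4 * m i j) * mom \<beta> fst e i j)"
      unfolding mom_def
    proof (rule integral_double_sum[where f="\<lambda>i j t. (fst t \<bullet> i) * (e t \<bullet> j)"])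
      fix i j :: 'a assume "i \<in> Basis" "j \<in> Basis"
      moreover note ie
      ultimately show "integrable \<beta> (\<lambda>t. (fst t \<bullet> i) * (e t \<bullet> j))"
        using pair_integrable[OF ia _ X1m em] by blast
    qed
    also have "\<dots> = 4 * (\<Sum>i\<in>Basis. \<Sum>j\<in>Basis. mom \<beta> fst fst i j * mom \<beta> fst (\<lambda>t. X3 t - fst t) i j)"
      unfolding momA e_def by (simp add: sum_distrib_left mult_ac)
    finally have Leq: "(\<integral>(x1, x2, x3). x2 \<bullet> (x3 - x1) \<partial>\<beta>) = 4 * (\<Sum>i\<in>Basis. \<Sum>j\<in>Basis. mom \<beta> fst fst i j * mom \<beta> fst (\<lambda>t. X3 t - fst t) i j)" .
    define c2 where "c2 = (\<integral>t. norm (e t) ^ 2 \<partial>\<beta>)"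
    define I where "I = (\<integral>t. norm (e t) powr p \<partial>\<beta>)"
    have rb: "\<bar>PFP \<nu> - PFP \<mu> - (\<integral>(x1, x2, x3). x2 \<bullet> (x3 - x1) \<partial>\<beta>)\<bar> \<le> KK * (c2 + c2^2)"
      using remainder_bound[OF X1m X3m ia ib]
      unfolding PFP\<mu> PFP\<nu> Leq KK_def c2_def e_def M1eq by simp
    have c20: "c2 \<ge> 0" unfolding c2_def by (intro integral_nonneg_AE) auto
    have I0: "I \<ge> 0" unfolding I_def by (intro integral_nonneg_AE) auto
    have ly: "c2 \<le> I powr (2 / p)"
      unfolding c2_def I_def
      by (rule lyapunov[OF ps\<beta> p2 _ ie ipe]) simp
    have fC: "(\<lambda>(x1::'a, x2::'a, x3::'a). norm (x1 - x3) powr p) = (\<lambda>t. norm (e t) powr p)"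
      unfolding e_def X3_def by (simp add: fun_eq_iff split_beta norm_minus_commute)
    have Ceq: "Cpb p \<beta> = I powr (1 / p)" unfolding Cpb_def I_def by (simp only: fC)
    have "(I powr (1 / p)) ^ 2 = (I powr (1 / p)) powr 2" by (simp add: powr_realpow')
    also have "\<dots> = I powr (2 / p)" by (simp add: powr_powr)
    finally have C2: "(Cpb p \<beta>)^2 = I powr (2 / p)" unfolding Ceq .
    have c2C: "c2 \<le> (Cpb p \<beta>)^2" using ly C2 by simp
    have "c2^2 \<le> ((Cpb p \<beta>)^2)^2" using c2C c20 by (intro power_mono) auto
    then have "KK * (c2 + c2^2) \<le> KK * ((Cpb p \<beta>)^2 + ((Cpb p \<beta>)^2)^2)"
      using c2C KK0 by (intro mult_left_mono) auto
    then show ?thesis using rb unfolding \<omega>_def by linarith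
  qed
  show ?thesis unfolding \<gamma>eq strongly_diff_def
    using part1 part2 part3 part4 part5 part6 by blast
qed

end
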